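(* Let $p_1,p_2,\dots$ be an infinite sequence of distinct primes and $e_i\in\mathbb N$ for each $i$. Consider the unital ring $P=\prod_{i\in\mathbb N}\mathbb Z(p_i^{e_i})$ (componentwise operations) and let $G$ be a unital subring of $P$ containing the ideal $T=\bigoplus_{i\in\mathbb N}\mathbb Z(p_i^{e_i})$. If the quotient ring $G/T$ is a field, then $G$ is an E-ring and its additive group is strongly co-Hopfian; moreover, if the $e_i$ are not bounded, then $G$ is not uniformly strongly co-Hopfian.
   Context: All groups are abelian. A ring $R$ is an E-ring if every endomorphism of its additive group is multiplication by some element of $R$. A group $G$ is strongly co-Hopfian if for every endomorphism $f$ there is $n\in\mathbb N$ with $f^n(G)=f^{n+1}(G)$; it is uniformly strongly co-Hopfian if there is a fixed $m$ with $\phi^m(G)=\phi^{m+1}(G)$ for all endomorphisms $\phi$. $\mathbb Z(q)$ denotes the cyclic group (ring) of order $q$. *)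

theory Defs
  imports "HOL-Algebra.Algebra" "HOL-Computational_Algebra.Primes"
begin

definition modulus :: "(nat \<Rightarrow> nat) \<Rightarrow> (nat \<Rightarrow> nat) \<Rightarrow> nat \<Rightarrow> int" where
  "modulus p e i = int (p i ^ e i)"

definition Pring :: "(nat \<Rightarrow> nat) \<Rightarrow> (nat \<Rightarrow> nat) \<Rightarrow> (nat \<Rightarrow> int) ring" where
  "Pring p e =
    \<lparr>carrier = {f. \<forall>i. 0 \<le> f i \<and> f i < modulus p e i},
     monoid.mult = (\<lambda>f g i. (f i * g i) mod modulus p e i),
     monoid.one = (\<lambda>i. 1 mod modulus p e i),
     ring.zero = (\<lambda>i. 0),
     ring.add = (\<lambda>f g i. (f i + g i) mod modulus p e i)\<rparr>"

definition Tset :: "(nat \<Rightarrow> nat) \<Rightarrow> (nat \<Rightarrow> nat) \<Rightarrow> (nat \<Rightarrow> int) set" where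
  "Tset p e = {f \<in> carrier (Pring p e). finite {i. f i \<noteq> 0}}"

definition add_endo :: "('a, 'b) ring_scheme \<Rightarrow> ('a \<Rightarrow> 'a) \<Rightarrow> bool" where
  "add_endo R f \<longleftrightarrow> (\<forall>x\<in>carrier R. f x \<in> carrier R) \<and>
     (\<forall>x\<in>carrier R. \<forall>y\<in>carrier R. f (x \<oplus>\<^bsub>R\<^esub> y) = f x \<oplus>\<^bsub>R\<^esub> f y)"

definition E_ring :: "('a, 'b) ring_scheme \<Rightarrow> bool" where
  "E_ring R \<longleftrightarrow> (\<forall>f. add_endo R f \<longrightarrow>
     (\<exists>r\<in>carrier R. \<forall>x\<in>carrier R. f x = r \<otimes>\<^bsub>R\<^esub> x))"

definition strongly_co_Hopfian :: "('a, 'b) ring_scheme \<Rightarrow> bool" where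
  "strongly_co_Hopfian R \<longleftrightarrow> (\<forall>f. add_endo R f \<longrightarrow>
     (\<exists>n. (f ^^ n) ` carrier R = (f ^^ Suc n) ` carrier R))"

definition uniformly_strongly_co_Hopfian :: "('a, 'b) ring_scheme \<Rightarrow> bool" where
  "uniformly_strongly_co_Hopfian R \<longleftrightarrow> (\<exists>m. \<forall>f. add_endo R f \<longrightarrow>
     (f ^^ m) ` carrier R = (f ^^ Suc m) ` carrier R)"

end

theory Submission imports Defs "HOL-Number_Theory.Cong" begin

definition nmul :: "(nat \<Rightarrow> int) \<Rightarrow> nat \<Rightarrow> (nat \<Rightarrow> int) \<Rightarrow> nat \<Rightarrow> int" where
  "nmul Q n x = (\<lambda>i. (int n * x i) mod Q i)"

lemma dvd_small: assumes "(0::int) \<le> a" "a < b" "b dvd a" shows "a = 0"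
proof (rule ccontr)
  assume "a \<noteq> 0"
  then have "0 < a" using assms by simp
  then have "b \<le> a" using zdvd_imp_le assms(3) by blast
  then show False using assms(2) by simp
qed

locale S =
  fixes p e :: "nat \<Rightarrow> nat" and G :: "(nat \<Rightarrow> int) set"
  assumes primes: "\<forall>i. Factorial_Ring.prime (p i)"
    and distinct: "inj p"
    and sub: "subring G (Pring p e)"
    and T_sub: "Tset p e \<subseteq> G"
    and fld: "field ((Pring p e)\<lparr>carrier := G\<rparr> Quot Tset p e)"
begin

abbreviation q where "q i \<equiv> modulus p e i"

lemma q_pos: "q i > 0"
proof -
  have "p i > 0" using primes prime_gt_0_nat by blast
  then show ?thesis by (simp add: modulus_def)
qed

lemma q_gt1: "e i > 0 \<Longrightarrow> q i > 1"
proof -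
  assume "e i > 0"
  have "p i > 1" using primes prime_gt_1_nat by blast
  then have "p i ^ e i > 1" using \<open>e i > 0\<close> using one_less_power by blast
  then show ?thesis unfolding modulus_def by (metis of_nat_1 of_nat_less_iff)
qed

lemma carrP: "carrier (Pring p e) = {f. \<forall>i. 0 \<le> f i \<and> f i < q i}"
  by (simp add: Pring_def)

lemma subG: "G \<subseteq> carrier (Pring p e)"
  using subgroup.subset[OF subring.axioms(1)[OF sub]] by simp

lemma G_bnd: "x \<in> G \<Longrightarrow> 0 \<le> x i \<and> x i < q i"
  using subG carrP by blast

lemma addG: "x \<in> G \<Longrightarrow> y \<in> G \<Longrightarrow> (\<lambda>i. (x i + y i) mod q i) \<in> G"
  using subgroup.m_closed[OF subring.axioms(1)[OF sub], of x y] by (simp add: Pring_def)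

lemma mulG: "x \<in> G \<Longrightarrow> y \<in> G \<Longrightarrow> (\<lambda>i. (x i * y i) mod q i) \<in> G"
  using submonoid.m_closed[OF subring.axioms(2)[OF sub], of x y] by (simp add: Pring_def)

lemma oneG: "(\<lambda>i. 1 mod q i) \<in> G"
  using submonoid.one_closed[OF subring.axioms(2)[OF sub]] by (simp add: Pring_def)

lemma zeroG: "(\<lambda>i. 0) \<in> G"
  using subgroup.one_closed[OF subring.axioms(1)[OF sub]] by (simp add: Pring_def)

lemma negG: "x \<in> G \<Longrightarrow> (\<lambda>i. (- x i) mod q i) \<in> G"
proof -
  assume x: "x \<in> G"
  have "inv\<^bsub>add_monoid (Pring p e)\<^esub> x = (\<lambda>i. (- x i) mod q i)"
    unfolding m_inv_def
  proof (rule the_equality)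
    show "(\<lambda>i. (- x i) mod q i) \<in> carrier (add_monoid (Pring p e)) \<and>
      (x \<otimes>\<^bsub>add_monoid (Pring p e)\<^esub> (\<lambda>i. (- x i) mod q i)) = \<one>\<^bsub>add_monoid (Pring p e)\<^esub> \<and>
      ((\<lambda>i. (- x i) mod q i) \<otimes>\<^bsub>add_monoid (Pring p e)\<^esub> x) = \<one>\<^bsub>add_monoid (Pring p e)\<^esub>"
      using q_pos by (auto simp: Pring_def mod_add_right_eq mod_add_left_eq)
  next
    fix y assume "y \<in> carrier (add_monoid (Pring p e)) \<and>
      (x \<otimes>\<^bsub>add_monoid (Pring p e)\<^esub> y) = \<one>\<^bsub>add_monoid (Pring p e)\<^esub> \<and>
      (y \<otimes>\<^bsub>add_monoid (Pring p e)\<^esub> x) = \<one>\<^bsub>add_monoid (Pring p e)\<^esub>"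
    then have y: "\<forall>i. 0 \<le> y i \<and> y i < q i" and h: "\<forall>i. (x i + y i) mod q i = 0"
      by (auto simp: Pring_def fun_eq_iff)
    show "y = (\<lambda>i. (- x i) mod q i)"
    proof
      fix i
      have "y i = y i mod q i" using y by simp
      also have "\<dots> = ((x i + y i) - x i) mod q i" by simp
      also have "\<dots> = (0 - x i) mod q i" using h by (metis mod_diff_left_eq)
      finally show "y i = (- x i) mod q i" by simp
    qed
  qed
  then show ?thesis using subgroup.m_inv_closed[OF subring.axioms(1)[OF sub] x] by simp
qed


lemma T_iff: "x \<in> Tset p e \<longleftrightarrow> (\<forall>i. 0 \<le> x i \<and> x i < q i) \<and> finite {i. x i \<noteq> 0}"
  by (simp add: Tset_def Pring_def)

lemma modq: "0 \<le> x \<Longrightarrow> x < q i \<Longrightarrow> x mod q i = x"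
  by simp

lemma cofin: assumes y: "\<forall>i. 0 \<le> y i \<and> y i < q i" and x: "x \<in> G"
  and fin: "finite {i. y i \<noteq> x i}" shows "y \<in> G"
proof -
  define d where "d = (\<lambda>i. (y i - x i) mod q i)"
  have "{i. d i \<noteq> 0} \<subseteq> {i. y i \<noteq> x i}" by (auto simp: d_def)
  then have "d \<in> Tset p e" using fin q_pos unfolding T_iff d_def by (auto intro: finite_subset)
  then have "d \<in> G" using T_sub by blast
  from addG[OF x this] have "(\<lambda>i. (x i + d i) mod q i) \<in> G" .
  moreover have "(\<lambda>i. (x i + d i) mod q i) = y"
  proof
    fix i
    have "(x i + d i) mod q i = (x i + (y i - x i)) mod q i" unfolding d_def by (simp add: mod_add_right_eq)
    also have "\<dots> = y i" using y by simp
    finally show "(x i + d i) mod q i = y i" .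
  qed
  ultimately show ?thesis by simp
qed

abbreviation R where "R \<equiv> (Pring p e)\<lparr>carrier := G\<rparr>"

lemma R_simps: "carrier R = G" "(x \<otimes>\<^bsub>R\<^esub> y) = (\<lambda>i. (x i * y i) mod q i)"
  "(x \<oplus>\<^bsub>R\<^esub> y) = (\<lambda>i. (x i + y i) mod q i)" "\<one>\<^bsub>R\<^esub> = (\<lambda>i. 1 mod q i)" "\<zero>\<^bsub>R\<^esub> = (\<lambda>i. 0)"
  by (simp_all add: Pring_def)

lemma coset_iff: "z \<in> Tset p e +>\<^bsub>R\<^esub> a \<longleftrightarrow> (\<exists>t\<in>Tset p e. z = (\<lambda>i. (t i + a i) mod q i))"
  unfolding a_r_coset_def' R_simps by auto

lemma zeroT: "(\<lambda>i. 0) \<in> Tset p e"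
  using q_pos by (simp add: T_iff)

lemma self_coset: "a \<in> G \<Longrightarrow> a \<in> Tset p e +>\<^bsub>R\<^esub> a"
  unfolding coset_iff using zeroT G_bnd by (intro bexI[of _ "\<lambda>i. 0"]) (auto simp: fun_eq_iff)

lemma coset_T: assumes a: "a \<in> Tset p e" shows "Tset p e +>\<^bsub>R\<^esub> a = Tset p e"
proof
  show "Tset p e +>\<^bsub>R\<^esub> a \<subseteq> Tset p e"
  proof
    fix z assume "z \<in> Tset p e +>\<^bsub>R\<^esub> a"
    then obtain t where t: "t \<in> Tset p e" and z: "z = (\<lambda>i. (t i + a i) mod q i)"
      unfolding coset_iff by blast
    have "{i. z i \<noteq> 0} \<subseteq> {i. t i \<noteq> 0} \<union> {i. a i \<noteq> 0}" using z by auto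
    then show "z \<in> Tset p e" using t a q_pos unfolding T_iff z by (auto intro: finite_subset)
  qed
next
  show "Tset p e \<subseteq> Tset p e +>\<^bsub>R\<^esub> a"
  proof
    fix z assume z: "z \<in> Tset p e"
    define t where "t = (\<lambda>i. (z i - a i) mod q i)"
    have "{i. t i \<noteq> 0} \<subseteq> {i. z i \<noteq> 0} \<union> {i. a i \<noteq> 0}" by (auto simp: t_def)
    then have tT: "t \<in> Tset p e" using z a q_pos unfolding T_iff t_def by (auto intro: finite_subset)
    have "z = (\<lambda>i. (t i + a i) mod q i)"
    proof
      fix i
      have "(t i + a i) mod q i = (z i - a i + a i) mod q i" unfolding t_def by (simp add: mod_add_left_eq)
      then show "z i = (t i + a i) mod q i" using z unfolding T_iff by simp
    qed
    then show "z \<in> Tset p e +>\<^bsub>R\<^esub> a" unfolding coset_iff using tT by blast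
  qed
qed

lemma fieldQ: "field (R Quot Tset p e)" using fld .

lemma one_notin_T: "(\<lambda>i. 1 mod q i) \<notin> Tset p e"
proof
  assume "(\<lambda>i. 1 mod q i) \<in> Tset p e"
  then have "Tset p e +>\<^bsub>R\<^esub> \<one>\<^bsub>R\<^esub> = Tset p e" using coset_T R_simps by simp
  then have "\<one>\<^bsub>R Quot Tset p e\<^esub> = \<zero>\<^bsub>R Quot Tset p e\<^esub>" by (simp add: FactRing_def)
  then show False using domain.one_not_zero[OF field.axioms(1)[OF fieldQ]] by simp
qed

lemma inf_e: "infinite {i. e i > 0}"
proof
  assume fin: "finite {i. e i > 0}"
  have "{i. 1 mod q i \<noteq> 0} \<subseteq> {i. e i > 0}" by (auto simp: modulus_def)
  then have "(\<lambda>i. 1 mod q i) \<in> Tset p e" using fin q_pos unfolding T_iff by (auto intro: finite_subset)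
  then show False using one_notin_T by simp
qed

lemma inverse: assumes a: "a \<in> G" and aT: "a \<notin> Tset p e"
  shows "\<exists>b\<in>G. \<exists>t\<in>Tset p e. (\<lambda>i. (a i * b i) mod q i) = (\<lambda>i. (t i + 1 mod q i) mod q i)"
proof -
  let ?Q = "R Quot Tset p e"
  let ?C = "Tset p e +>\<^bsub>R\<^esub> a"
  have Cc: "?C \<in> carrier ?Q" using a unfolding FactRing_def A_RCOSETS_def' by (auto simp: R_simps)
  have "?C \<noteq> \<zero>\<^bsub>?Q\<^esub>" using self_coset[OF a] aT by (auto simp: FactRing_def)
  then have "?C \<in> Units ?Q" using field.field_Units[OF fieldQ] Cc by blast
  then obtain Bc where Bcc: "Bc \<in> carrier ?Q" and Bc: "?C \<otimes>\<^bsub>?Q\<^esub> Bc = \<one>\<^bsub>?Q\<^esub>"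
    unfolding Units_def by blast
  from Bcc obtain b where b: "b \<in> G" and Bcb: "Bc = Tset p e +>\<^bsub>R\<^esub> b"
    unfolding FactRing_def A_RCOSETS_def' by (auto simp: R_simps)
  have "Tset p e +>\<^bsub>R\<^esub> (\<lambda>i. (a i * b i) mod q i) \<subseteq> ?C \<otimes>\<^bsub>?Q\<^esub> Bc"
    unfolding Bcb FactRing_def rcoset_mult_def R_simps using self_coset[OF a] self_coset[OF b] by auto
  then have "(\<lambda>i. (a i * b i) mod q i) \<in> Tset p e +>\<^bsub>R\<^esub> (\<lambda>i. 1 mod q i)"
    using Bc self_coset[OF mulG[OF a b]] by (auto simp: FactRing_def R_simps)
  then show ?thesis using b unfolding coset_iff by blast
qed


lemma nm_Suc: "nmul q (Suc n) x = (\<lambda>i. (x i + nmul q n x i) mod q i)"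
proof
  fix i
  have "int (Suc n) * x i = x i + int n * x i" by (simp add: distrib_right)
  then show "nmul q (Suc n) x i = (x i + nmul q n x i) mod q i"
    unfolding nmul_def by (simp add: mod_add_right_eq)
qed

lemma nm_G: "x \<in> G \<Longrightarrow> nmul q n x \<in> G"
proof (induction n)
  case 0 then show ?case using zeroG by (simp add: nmul_def)
next
  case (Suc n) then show ?case using addG nm_Suc by simp
qed

lemma p_gt1: "p i > 1" using primes prime_gt_1_nat by blast

lemma coprime_q: "j \<noteq> i \<Longrightarrow> coprime (p j ^ e j) (p i ^ e i)"
proof -
  assume "j \<noteq> i"
  then have "p j \<noteq> p i" using distinct by (meson injD)
  then have "coprime (p j) (p i)" using primes primes_coprime by blast
  then show ?thesis by simp
qed

lemma unit_p: "\<exists>u\<in>G. \<exists>t\<in>Tset p e. \<forall>j. t j = 0 \<longrightarrow> (int (p i) * u j) mod q j = 1 mod q j"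
proof -
  define c where "c = nmul q (p i) (\<lambda>j. 1 mod q j)"
  have cG: "c \<in> G" unfolding c_def by (rule nm_G[OF oneG])
  have sub1: "{j. e j > 0} - {i} \<subseteq> {j. c j \<noteq> 0}"
  proof
    fix j assume j: "j \<in> {j. e j > 0} - {i}"
    then have q1: "q j > 1" using q_gt1 by blast
    then have cj: "c j = int (p i) mod q j" unfolding c_def nmul_def by simp
    have "c j \<noteq> 0"
    proof
      assume "c j = 0"
      then have "q j dvd int (p i)" using cj by (simp add: mod_eq_0_iff_dvd)
      then have "p j ^ e j dvd p i" unfolding modulus_def by (metis int_dvd_int_iff)
      moreover have "p j dvd p j ^ e j" using j by (simp add: dvd_power)
      ultimately have "p j dvd p i" using dvd_trans by blast
      then have "p j = p i" using primes primes_dvd_imp_eq by blast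
      then show False using j distinct by (auto dest: injD)
    qed
    then show "j \<in> {j. c j \<noteq> 0}" by simp
  qed
  have "infinite ({j. e j > 0} - {i})" using inf_e by simp
  then have "infinite {j. c j \<noteq> 0}" using sub1 finite_subset by blast
  then have "c \<notin> Tset p e" unfolding T_iff by blast
  from inverse[OF cG this] obtain u t where u: "u \<in> G" and t: "t \<in> Tset p e"
    and ut: "(\<lambda>j. (c j * u j) mod q j) = (\<lambda>j. (t j + 1 mod q j) mod q j)" by blast
  have "\<forall>j. t j = 0 \<longrightarrow> (int (p i) * u j) mod q j = 1 mod q j"
  proof (intro allI impI)
    fix j assume tj: "t j = 0"
    have "(c j * u j) mod q j = 1 mod q j" using fun_cong[OF ut, of j] tj by simp
    moreover have "(c j * u j) mod q j = (int (p i) * u j) mod q j"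
      unfolding c_def nmul_def by (simp add: mod_simps)
    ultimately show "(int (p i) * u j) mod q j = 1 mod q j" by simp
  qed
  then show ?thesis using u t by blast
qed

context
  fixes f assumes endo: "add_endo R f"
begin

lemma f_G: "x \<in> G \<Longrightarrow> f x \<in> G"
  using endo unfolding add_endo_def R_simps by blast

lemma f_add: "x \<in> G \<Longrightarrow> y \<in> G \<Longrightarrow> f (\<lambda>i. (x i + y i) mod q i) = (\<lambda>i. (f x i + f y i) mod q i)"
  using endo unfolding add_endo_def R_simps by blast

lemma f0: "f (\<lambda>i. 0) = (\<lambda>i. 0)"
proof
  fix i
  have "f (\<lambda>i. 0) = (\<lambda>i. (f (\<lambda>i. 0) i + f (\<lambda>i. 0) i) mod q i)"
    using f_add[OF zeroG zeroG] by simp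
  then have h: "(f (\<lambda>i. 0) i + f (\<lambda>i. 0) i) mod q i = f (\<lambda>i. 0) i mod q i"
    using G_bnd[OF f_G[OF zeroG]] by (metis mod_pos_pos_trivial)
  have "q i dvd f (\<lambda>i. 0) i" using mod_eq_dvd_iff[THEN iffD1, OF h] by simp
  then show "f (\<lambda>i. 0) i = 0" using dvd_small G_bnd[OF f_G[OF zeroG]] by blast
qed

lemma f_nm: "x \<in> G \<Longrightarrow> f (nmul q n x) = nmul q n (f x)"
proof (induction n)
  case 0 then show ?case using f0 by (simp add: nmul_def)
next
  case (Suc n)
  have "f (nmul q (Suc n) x) = (\<lambda>i. (f x i + f (nmul q n x) i) mod q i)"
    unfolding nm_Suc using f_add[OF Suc.prems nm_G[OF Suc.prems]] .
  then show ?case using Suc by (simp add: nm_Suc)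
qed

lemma lemA: assumes z: "z \<in> G" and nz: "nmul q n z = (\<lambda>i. 0)" and cop: "coprime (int n) (q i)"
  shows "f z i = 0"
proof -
  have "nmul q n (f z) = f (nmul q n z)" using f_nm[OF z] by simp
  also have "\<dots> = (\<lambda>i. 0)" using nz f0 by simp
  finally have "nmul q n (f z) = (\<lambda>i. 0)" .
  then have "(int n * f z i) mod q i = 0" using fun_cong[of "nmul q n (f z)" "\<lambda>i. 0" i] unfolding nmul_def by simp
  then have "q i dvd int n * f z i" by (simp add: mod_eq_0_iff_dvd)
  moreover have "coprime (q i) (int n)" using cop by (rule coprime_commute[THEN iffD1])
  ultimately have "q i dvd f z i" using coprime_dvd_mult_right_iff by blast
  then show ?thesis using dvd_small G_bnd[OF f_G[OF z]] by blast
qed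

lemma lemT: assumes z: "z \<in> Tset p e" and zi: "z i = 0" shows "f z i = 0"
proof -
  define S where "S = {j. z j \<noteq> 0}"
  have finS: "finite S" using z unfolding S_def T_iff by blast
  have iS: "i \<notin> S" using zi S_def by simp
  define n where "n = (\<Prod>j\<in>S. p j ^ e j)"
  have nz: "nmul q n z = (\<lambda>i. 0)"
  proof
    fix j
    show "nmul q n z j = 0"
    proof (cases "j \<in> S")
      case True
      then have "p j ^ e j dvd n" unfolding n_def using finS by blast
      then have "q j dvd int n" unfolding modulus_def by (metis int_dvd_int_iff)
      then show ?thesis unfolding nmul_def by simp
    next
      case False then show ?thesis unfolding nmul_def S_def by simp
    qed
  qed
  have cop: "coprime (int n) (q i)"
  proof -
    have "coprime n (p i ^ e i)" unfolding n_def
    proof (rule prod_coprime_left)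
      fix j assume "j \<in> S"
      then have "j \<noteq> i" using iS by auto
      then show "coprime (p j ^ e j) (p i ^ e i)" by (rule coprime_q)
    qed
    then show ?thesis unfolding modulus_def by (metis coprime_int_iff)
  qed
  have zG: "z \<in> G" using z T_sub by blast
  show ?thesis by (rule lemA[OF zG nz cop])
qed

lemma lemB: assumes "k \<le> e i" shows "\<forall>y\<in>G. y i = 0 \<longrightarrow> int (p i) ^ k dvd f y i"
  using assms
proof (induction k)
  case 0 then show ?case by simp
next
  case (Suc k)
  obtain u t where u: "u \<in> G" and t: "t \<in> Tset p e"
    and ut: "\<forall>j. t j = 0 \<longrightarrow> (int (p i) * u j) mod q j = 1 mod q j"
    using unit_p by blast
  show ?case
  proof (intro ballI impI)
    fix y assume y: "y \<in> G" and yi: "y i = 0"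
    define y' where "y' = (\<lambda>j. (u j * y j) mod q j)"
    have y'G: "y' \<in> G" unfolding y'_def using mulG[OF u y] .
    have y'i: "y' i = 0" unfolding y'_def using yi by simp
    define z where "z = (\<lambda>j. (y j - int (p i) * y' j) mod q j)"
    have "{j. z j \<noteq> 0} \<subseteq> {j. t j \<noteq> 0}"
    proof
      fix j assume "j \<in> {j. z j \<noteq> 0}"
      then have zj: "z j \<noteq> 0" by simp
      show "j \<in> {j. t j \<noteq> 0}"
      proof (rule ccontr)
        assume "j \<notin> {j. t j \<noteq> 0}"
        then have h: "(int (p i) * u j) mod q j = 1 mod q j" using ut by simp
        have "(int (p i) * y' j) mod q j = ((int (p i) * u j) * y j) mod q j"
          unfolding y'_def by (simp add: mod_simps mult.assoc)
        also have "\<dots> = (((int (p i) * u j) mod q j) * y j) mod q j" by (simp add: mod_simps)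
        also have "\<dots> = y j mod q j" using h by (simp add: mod_simps)
        finally have "(int (p i) * y' j) mod q j = y j mod q j" .
        then have "z j = (y j - y j) mod q j" unfolding z_def by (metis mod_diff_right_eq mod_diff_left_eq)
        then show False using zj by simp
      qed
    qed
    then have zT: "z \<in> Tset p e" using t q_pos unfolding T_iff z_def by (auto intro: finite_subset)
    have zG: "z \<in> G" using zT T_sub by blast
    have zi: "z i = 0" unfolding z_def using yi y'i by simp
    have yeq: "y = (\<lambda>j. (nmul q (p i) y' j + z j) mod q j)"
    proof
      fix j
      have "(nmul q (p i) y' j + z j) mod q j = (int (p i) * y' j + (y j - int (p i) * y' j)) mod q j"
        unfolding nmul_def z_def by (simp add: mod_simps)
      also have "\<dots> = y j" using G_bnd[OF y] by simp
      finally show "y j = (nmul q (p i) y' j + z j) mod q j" by simp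
    qed
    have "f y = (\<lambda>j. (f (nmul q (p i) y') j + f z j) mod q j)"
      using f_add[OF nm_G[OF y'G] zG] yeq by metis
    then have "f y i = (int (p i) * f y' i) mod q i"
      using f_nm[OF y'G] lemT[OF zT zi] by (simp add: nmul_def mod_simps)
    moreover have "int (p i) ^ k dvd f y' i" using Suc y'G y'i by simp
    then have "int (p i) ^ Suc k dvd int (p i) * f y' i" by simp
    moreover have "int (p i) ^ Suc k dvd q i" unfolding modulus_def
      using le_imp_power_dvd[OF Suc.prems] by simp
    ultimately show "int (p i) ^ Suc k dvd f y i" by (simp add: dvd_mod)
  qed
qed

lemma lemB0: assumes y: "y \<in> G" and yi: "y i = 0" shows "f y i = 0"
proof -
  have "int (p i) ^ e i dvd f y i" using lemB[of "e i" i] y yi by blast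
  then have "q i dvd f y i" unfolding modulus_def by simp
  then show ?thesis using dvd_small G_bnd[OF f_G[OF y]] by blast
qed

lemma lemB': assumes x: "x \<in> G" and x': "x' \<in> G" and xi: "x i = x' i" shows "f x i = f x' i"
proof -
  define y where "y = (\<lambda>j. (x j + (- x' j) mod q j) mod q j)"
  have yG: "y \<in> G" unfolding y_def using addG[OF x negG[OF x']] .
  have yi: "y i = 0" unfolding y_def using xi by (simp add: mod_simps)
  have xeq: "x = (\<lambda>j. (y j + x' j) mod q j)"
  proof
    fix j
    have "(y j + x' j) mod q j = (x j + - x' j + x' j) mod q j" unfolding y_def by (simp add: mod_simps)
    also have "\<dots> = x j" using G_bnd[OF x] by simp
    finally show "x j = (y j + x' j) mod q j" by simp
  qed
  have "f x = (\<lambda>j. (f y j + f x' j) mod q j)" using f_add[OF yG x'] xeq by metis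
  then have "f x i = (f y i + f x' i) mod q i" by simp
  also have "\<dots> = f x' i" using lemB0[OF yG yi] G_bnd[OF f_G[OF x']] by simp
  finally show ?thesis .
qed

lemma f_mult: assumes x: "x \<in> G" shows "f x = (\<lambda>i. (f (\<lambda>j. 1 mod q j) i * x i) mod q i)"
proof
  fix i
  define w where "w = nmul q (nat (x i)) (\<lambda>j. 1 mod q j)"
  have wG: "w \<in> G" unfolding w_def by (rule nm_G[OF oneG])
  have wi: "w i = x i" unfolding w_def nmul_def using G_bnd[OF x, of i] by (simp add: mod_simps)
  have "f x i = f w i" using lemB'[OF x wG] wi by simp
  also have "\<dots> = nmul q (nat (x i)) (f (\<lambda>j. 1 mod q j)) i"
    unfolding w_def f_nm[OF oneG] by simp
  also have "\<dots> = (x i * f (\<lambda>j. 1 mod q j) i) mod q i"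
    unfolding nmul_def using G_bnd[OF x, of i] by simp
  finally show "f x i = (f (\<lambda>j. 1 mod q j) i * x i) mod q i" by (simp add: mult.commute)
qed

end

lemma Ering: "E_ring R"
  unfolding E_ring_def R_simps
proof (intro allI impI)
  fix f assume endo: "add_endo R f"
  show "\<exists>r\<in>G. \<forall>x\<in>G. f x = (\<lambda>i. (r i * x i) mod q i)"
    using f_mult[OF endo] f_G[OF endo oneG] by blast
qed

lemma regular: assumes r: "r \<in> G"
  shows "\<exists>s\<in>G. \<exists>F. finite F \<and> (\<forall>j. j \<notin> F \<longrightarrow> (r j * s j * r j) mod q j = r j mod q j)"
proof (cases "r \<in> Tset p e")
  case True
  then have fin: "finite {j. r j \<noteq> 0}" unfolding T_iff by blast
  show ?thesis
  proof (rule bexI[OF _ zeroG])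
    show "\<exists>F. finite F \<and> (\<forall>j. j \<notin> F \<longrightarrow> (r j * 0 * r j) mod q j = r j mod q j)"
      using fin by (intro exI[of _ "{j. r j \<noteq> 0}"]) simp
  qed
next
  case False
  from inverse[OF r False] obtain b t where b: "b \<in> G" and t: "t \<in> Tset p e"
    and bt: "(\<lambda>i. (r i * b i) mod q i) = (\<lambda>i. (t i + 1 mod q i) mod q i)" by blast
  have fin: "finite {j. t j \<noteq> 0}" using t unfolding T_iff by blast
  have hh: "\<forall>j. j \<notin> {j. t j \<noteq> 0} \<longrightarrow> (r j * b j * r j) mod q j = r j mod q j"
  proof (intro allI impI)
    fix j assume "j \<notin> {j. t j \<noteq> 0}"
    then have h: "(r j * b j) mod q j = 1 mod q j" using fun_cong[OF bt, of j] by simp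
    have "(r j * b j * r j) mod q j = (((r j * b j) mod q j) * r j) mod q j" by (simp add: mod_simps)
    also have "\<dots> = r j mod q j" using h by (simp add: mod_simps)
    finally show "(r j * b j * r j) mod q j = r j mod q j" .
  qed
  show ?thesis
  proof (rule bexI[OF _ b])
    show "\<exists>F. finite F \<and> (\<forall>j. j \<notin> F \<longrightarrow> (r j * b j * r j) mod q j = r j mod q j)"
      using fin hh by (intro exI[of _ "{j. t j \<noteq> 0}"] conjI)
  qed
qed

lemma noncop: assumes "\<not> coprime a (q j)" shows "q j dvd a ^ e j"
proof -
  have pr: "Factorial_Ring.prime (int (p j))" using primes by simp
  have "int (p j) dvd a"
  proof (rule ccontr)
    assume nd: "\<not> int (p j) dvd a"
    have "coprime (int (p j)) a" using prime_imp_coprime[OF pr nd] .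
    then have "coprime a (int (p j))" using coprime_commute by blast
    then have "coprime a (int (p j) ^ e j)" by simp
    then show False using assms unfolding modulus_def of_nat_power by blast
  qed
  then show ?thesis unfolding modulus_def of_nat_power by (rule dvd_power_same)
qed

lemma SCH: "strongly_co_Hopfian R"
  unfolding strongly_co_Hopfian_def R_simps
proof (intro allI impI)
  fix f assume endo: "add_endo R f"
  define r where "r = f (\<lambda>j. 1 mod q j)"
  have rG: "r \<in> G" unfolding r_def using f_G[OF endo oneG] .
  have hf: "\<And>x. x \<in> G \<Longrightarrow> f x = (\<lambda>i. (r i * x i) mod q i)" unfolding r_def using f_mult[OF endo] .
  obtain s F where sG: "s \<in> G" and finF: "finite F"
    and sF: "\<forall>j. j \<notin> F \<longrightarrow> (r j * s j * r j) mod q j = r j mod q j"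
    using regular[OF rG] by blast
  have iter: "\<forall>x\<in>G. (f ^^ k) x = (\<lambda>j. (r j ^ k * x j) mod q j) \<and> (f ^^ k) x \<in> G" for k
  proof (induction k)
    case 0 then show ?case using G_bnd by (auto simp: fun_eq_iff)
  next
    case (Suc k)
    show ?case
    proof
      fix x assume x: "x \<in> G"
      have "(f ^^ Suc k) x = f ((f ^^ k) x)" by simp
      also have "\<dots> = (\<lambda>i. (r i * (f ^^ k) x i) mod q i)" using hf Suc x by blast
      also have "\<dots> = (\<lambda>j. (r j ^ Suc k * x j) mod q j)" using Suc x by (simp add: mod_simps mult.assoc)
      finally have eq: "(f ^^ Suc k) x = (\<lambda>j. (r j ^ Suc k * x j) mod q j)" .
      have "(f ^^ k) x \<in> G" using Suc x by blast
      then have "(f ^^ Suc k) x \<in> G" using f_G[OF endo] by (metis comp_apply funpow.simps(2))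
      then show "(f ^^ Suc k) x = (\<lambda>j. (r j ^ Suc k * x j) mod q j) \<and> (f ^^ Suc k) x \<in> G"
        using eq by blast
    qed
  qed
  define N where "N = sum e F"
  define n where "n = Suc N"
  have eN: "j \<in> F \<Longrightarrow> e j \<le> N" for j unfolding N_def using finF by (simp add: member_le_sum)
  have "(f ^^ n) ` G = (f ^^ Suc n) ` G"
  proof
    show "(f ^^ Suc n) ` G \<subseteq> (f ^^ n) ` G"
    proof
      fix z assume "z \<in> (f ^^ Suc n) ` G"
      then obtain x where x: "x \<in> G" and z: "z = (f ^^ Suc n) x" by blast
      have "z = (f ^^ n) (f x)" unfolding z funpow_Suc_right by simp
      then show "z \<in> (f ^^ n) ` G" using f_G[OF endo x] by blast
    qed
  next
    show "(f ^^ n) ` G \<subseteq> (f ^^ Suc n) ` G"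
    proof
      fix z assume "z \<in> (f ^^ n) ` G"
      then obtain x where x: "x \<in> G" and z: "z = (f ^^ n) x" by blast
      define v where "v = (\<lambda>j. SOME v. [r j * v = 1] (mod q j))"
      define y where "y = (\<lambda>j. if j \<in> F \<and> coprime (r j) (q j) then (v j * x j) mod q j else (s j * x j) mod q j)"
      have yb: "\<forall>j. 0 \<le> y j \<and> y j < q j" unfolding y_def using q_pos by simp
      have "{j. y j \<noteq> (s j * x j) mod q j} \<subseteq> F" unfolding y_def by auto
      then have "finite {j. y j \<noteq> (s j * x j) mod q j}" using finF finite_subset by blast
      then have yG: "y \<in> G" using cofin[OF yb mulG[OF sG x]] by simp
      have "(\<lambda>j. (r j ^ n * x j) mod q j) = (\<lambda>j. (r j ^ Suc n * y j) mod q j)"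
      proof
        fix j
        show "(r j ^ n * x j) mod q j = (r j ^ Suc n * y j) mod q j"
        proof (cases "j \<in> F")
          case jF: True
          show ?thesis
          proof (cases "coprime (r j) (q j)")
            case True
            have "[r j * v j = 1] (mod q j)" unfolding v_def
              using someI_ex[OF cong_solve_coprime_int[OF True]] by simp
            then have h: "(r j * v j) mod q j = 1 mod q j" by (simp add: cong_def)
            have "(r j ^ Suc n * y j) mod q j = (r j ^ Suc n * (v j * x j)) mod q j"
              unfolding y_def using jF True by (simp add: mod_mult_right_eq)
            also have "\<dots> = (r j ^ n * x j * (r j * v j)) mod q j"
              by (rule arg_cong[where f="\<lambda>z. z mod q j"]) (simp add: algebra_simps)
            also have "\<dots> = (r j ^ n * x j * ((r j * v j) mod q j)) mod q j" by (simp add: mod_simps)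
            also have "\<dots> = (r j ^ n * x j) mod q j" using h by (simp add: mod_simps)
            finally show ?thesis by simp
          next
            case False
            have "q j dvd r j ^ e j" using noncop[OF False] .
            moreover have "r j ^ e j dvd r j ^ n" using eN[OF jF] unfolding n_def
              by (intro le_imp_power_dvd) simp
            ultimately have d: "q j dvd r j ^ n" using dvd_trans by blast
            then have "q j dvd r j ^ Suc n" by (simp add: dvd_mult2)
            then have "(r j ^ Suc n * y j) mod q j = 0" by (simp add: mod_eq_0_iff_dvd dvd_mult2)
            moreover have "(r j ^ n * x j) mod q j = 0" using d by (simp add: mod_eq_0_iff_dvd dvd_mult2)
            ultimately show ?thesis by simp
          qed
        next
          case False
          have h: "(r j * s j * r j) mod q j = r j mod q j" using sF False by blast
          have "(r j ^ Suc n * y j) mod q j = (r j ^ Suc n * (s j * x j)) mod q j"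
            unfolding y_def using False by (simp add: mod_mult_right_eq)
          also have "\<dots> = (r j ^ N * x j * (r j * s j * r j)) mod q j"
            unfolding n_def by (rule arg_cong[where f="\<lambda>z. z mod q j"]) (simp add: algebra_simps)
          also have "\<dots> = (r j ^ N * x j * ((r j * s j * r j) mod q j)) mod q j" by (simp add: mod_simps)
          also have "\<dots> = (r j ^ N * x j * r j) mod q j" using h by (simp add: mod_simps)
          also have "\<dots> = (r j ^ n * x j) mod q j" unfolding n_def by (simp add: algebra_simps)
          finally show ?thesis by simp
        qed
      qed
      moreover have e1: "(f ^^ n) x = (\<lambda>j. (r j ^ n * x j) mod q j)" using iter[of n] x by blast
      moreover have e2: "(f ^^ Suc n) y = (\<lambda>j. (r j ^ Suc n * y j) mod q j)" using iter[of "Suc n"] yG by blast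
      ultimately have "z = (f ^^ Suc n) y" using z by simp
      then show "z \<in> (f ^^ Suc n) ` G" using yG by blast
    qed
  qed
  then show "\<exists>n. (f ^^ n) ` G = (f ^^ Suc n) ` G" by blast
qed

lemma NU: assumes nb: "\<not> bdd_above (range e)" shows "\<not> uniformly_strongly_co_Hopfian R"
proof
  assume "uniformly_strongly_co_Hopfian R"
  then obtain m where hm: "\<forall>f. add_endo R f \<longrightarrow> (f ^^ m) ` G = (f ^^ Suc m) ` G"
    unfolding uniformly_strongly_co_Hopfian_def R_simps by blast
  have "\<exists>i. e i > m"
  proof (rule ccontr)
    assume "\<not> (\<exists>i. e i > m)"
    then have "\<forall>x\<in>range e. x \<le> m" by (auto simp: not_less)
    then show False using nb unfolding bdd_above_def by blast
  qed
  then obtain i where ei: "e i > m" by blast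
  define g where "g = (\<lambda>(x::nat \<Rightarrow> int) j. if j = i then (int (p i) * x j) mod q j else 0)"
  have gT: "g x \<in> Tset p e" for x
  proof -
    have "{j. g x j \<noteq> 0} \<subseteq> {i}" unfolding g_def by auto
    then show ?thesis unfolding T_iff g_def using q_pos by (auto intro: finite_subset)
  qed
  have "add_endo R g" unfolding add_endo_def R_simps
  proof (intro conjI ballI)
    fix x assume "x \<in> G" show "g x \<in> G" using gT T_sub by blast
  next
    fix x y assume "x \<in> G" "y \<in> G"
    show "g (\<lambda>i. (x i + y i) mod q i) = (\<lambda>ia. (g x ia + g y ia) mod q ia)"
      unfolding g_def by (auto simp: fun_eq_iff mod_simps distrib_left)
  qed
  then have eq: "(g ^^ m) ` G = (g ^^ Suc m) ` G" using hm by blast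
  have gi: "\<forall>y\<in>G. (g ^^ k) y i = (int (p i) ^ k * y i) mod q i" for k
  proof (induction k)
    case 0 then show ?case using G_bnd by simp
  next
    case (Suc k) then show ?case unfolding g_def by (simp add: mod_simps mult.assoc)
  qed
  have "(g ^^ m) (\<lambda>j. 1 mod q j) \<in> (g ^^ Suc m) ` G" using eq oneG by blast
  then obtain y where y: "y \<in> G" and hy: "(g ^^ m) (\<lambda>j. 1 mod q j) = (g ^^ Suc m) y" by blast
  have q1: "q i > 1" using q_gt1 ei by simp
  have pm: "int (p i) ^ m < q i" unfolding modulus_def using p_gt1[of i] ei
    by (metis of_nat_less_iff of_nat_power power_strict_increasing_iff)
  have "(g ^^ m) (\<lambda>j. 1 mod q j) i = int (p i) ^ m"
    using gi[of m] oneG q1 pm by simp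
  moreover have "(g ^^ Suc m) y i = (int (p i) ^ Suc m * y i) mod q i" using gi y by blast
  moreover have "int (p i) ^ Suc m dvd q i" unfolding modulus_def
    using le_imp_power_dvd[of "Suc m" "e i" "p i"] ei by (metis Suc_leI int_dvd_int_iff of_nat_power)
  ultimately have "int (p i) ^ Suc m dvd int (p i) ^ m" using hy by (metis dvd_mod dvd_triv_left)
  moreover have "int (p i) ^ m > 0" using p_gt1[of i] by simp
  ultimately have "int (p i) ^ Suc m \<le> int (p i) ^ m" using zdvd_imp_le by blast
  moreover have "int (p i) ^ m < int (p i) ^ Suc m" using p_gt1[of i] by simp
  ultimately show False by simp
qed

end

theorem mainTheorem16:
  fixes p e :: "nat \<Rightarrow> nat" and G :: "(nat \<Rightarrow> int) set"
  assumes primes: "\<forall>i. Factorial_Ring.prime (p i)"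
    and distinct: "inj p"
    and sub: "subring G (Pring p e)"
    and T_sub: "Tset p e \<subseteq> G"
    and fld: "field ((Pring p e)\<lparr>carrier := G\<rparr> Quot Tset p e)"
  shows "E_ring ((Pring p e)\<lparr>carrier := G\<rparr>)
    \<and> strongly_co_Hopfian ((Pring p e)\<lparr>carrier := G\<rparr>)
    \<and> (\<not> bdd_above (range e) \<longrightarrow>
         \<not> uniformly_strongly_co_Hopfian ((Pring p e)\<lparr>carrier := G\<rparr>))"
proof -
  have "S p e G" unfolding S_def using assms by blast
  then interpret S p e G .
  show ?thesis using Ering SCH NU by blast
qed

end
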